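(* Consider any sequences evolved by Algorithm 1 and let $d_0:=\|x^*-x^0\|$. Then: (a) for all $k\ge1$ and $x\in\mathcal H$, $A_k[h(y^k)-h(x)]+\frac{1-\sigma^2}{2}\sum_{j=1}^k\frac{A_j}{\lambda_j}\|y^j-\tilde x^{j-1}\|^2+\sum_{j=1}^k\frac{\mu(1+\mu A_{j-1})\lambda_jA_{j-1}}{2a_j}\|x^{j-1}-y^{j-1}\|^2+\frac{1+\mu A_k}{2}\|x-x^k\|^2\le\frac12\|x-x^0\|^2$; (b) if $\sigma<1$, then for all $k\ge1$, $\sum_{j=1}^k\frac{A_j}{\lambda_j}\|y^j-\tilde x^{j-1}\|^2\le\frac{d_0^2}{1-\sigma^2}$.
   Context: Setting: $\mathcal H$ is a finite-dimensional real inner product space with inner product $\langle\cdot,\cdot\rangle$ and norm $\|\cdot\|$. $f,g:\mathcal H\to(-\infty,\infty]$ are proper, closed, convex functions, $h:=f+g$ has nonempty domain, and $g$ is $\mu$-strongly convex for some $\mu>0$, i.e. $g(tx+(1-t)y)\le tg(x)+(1-t)g(y)-\frac{\mu}{2}t(1-t)\|x-y\|^2$ for all $x,y\in\mathcal H$, $t\in[0,1]$. $x^*$ denotes the unique minimizer of $h$. For $\varepsilon\ge 0$, $\partial_\varepsilon f(y):=\{u\in\mathcal H: f(w)\ge f(y)+\langle u,w-y\rangle-\varepsilon\ \forall w\in\mathcal H\}$, and $\partial g:=\partial_0 g$. Algorithm 1: Choose $x^0,y^0\in\mathcal H$ and $\sigma\in[0,1]$, and set $A_0=0$. For $k=0,1,2,\dots$: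 choose $\lambda_{k+1}>0$, set $a_{k+1}=\frac{(1+2\mu A_k)\lambda_{k+1}+\sqrt{(1+2\mu A_k)^2\lambda_{k+1}^2+4(1+\mu A_k)A_k\lambda_{k+1}}}{2}$ and $\tilde x^k=\frac{a_{k+1}-\mu A_k\lambda_{k+1}}{A_k+a_{k+1}}x^k+\frac{A_k+\mu A_k\lambda_{k+1}}{A_k+a_{k+1}}y^k$; compute $(y^{k+1},v^{k+1},\varepsilon_{k+1})\in\mathcal H\times\mathcal H\times[0,\infty)$ such that $v^{k+1}\in\partial_{\varepsilon_{k+1}}f(y^{k+1})+\partial g(y^{k+1})$ and $\frac{\|\lambda_{k+1}v^{k+1}+y^{k+1}-\tilde x^k\|^2}{1+\lambda_{k+1}\mu}+2\lambda_{k+1}\varepsilon_{k+1}\le\sigma^2\|y^{k+1}-\tilde x^k\|^2$; then set $A_{k+1}=A_k+a_{k+1}$ and $x^{k+1}=\frac{1+\mu A_k}{1+\mu A_{k+1}}x^k+\frac{\mu a_{k+1}}{1+\mu A_{k+1}}y^{k+1}-\frac{a_{k+1}}{1+\mu A_{k+1}}v^{k+1}$. "Sequences evolved by Algorithm 1" means any sequences satisfying all these relations for every $k\ge 0$. *)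

theory Defs
  imports "HOL-Analysis.Analysis"
begin

text \<open>Extended-real-valued functions on a finite-dimensional real inner product space
  (modelled as a type of class euclidean_space), with values in (-infinity, +infinity].\<close>

definition proper_fun :: "('a \<Rightarrow> ereal) \<Rightarrow> bool" where
  "proper_fun f \<longleftrightarrow> (\<forall>x. f x \<noteq> -\<infinity>) \<and> (\<exists>x. f x \<noteq> \<infinity>)"

definition closed_fun :: "('a::topological_space \<Rightarrow> ereal) \<Rightarrow> bool" where
  "closed_fun f \<longleftrightarrow> closed {(x, r::real). f x \<le> ereal r}"

definition convex_fun :: "('a::real_vector \<Rightarrow> ereal) \<Rightarrow> bool" where
  "convex_fun f \<longleftrightarrow> (\<forall>x y t. 0 \<le> t \<and> t \<le> 1 \<longrightarrow>
     f (t *\<^sub>R x + (1 - t) *\<^sub>R y) \<le> ereal t * f x + ereal (1 - t) * f y)"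

definition strongly_convex_fun :: "real \<Rightarrow> ('a::real_normed_vector \<Rightarrow> ereal) \<Rightarrow> bool" where
  "strongly_convex_fun \<mu> g \<longleftrightarrow> (\<forall>x y t. 0 \<le> t \<and> t \<le> 1 \<longrightarrow>
     g (t *\<^sub>R x + (1 - t) *\<^sub>R y) \<le> ereal t * g x + ereal (1 - t) * g y
        - ereal (\<mu> / 2 * t * (1 - t) * (norm (x - y))\<^sup>2))"

definition eps_subdiff :: "real \<Rightarrow> ('a::real_inner \<Rightarrow> ereal) \<Rightarrow> 'a \<Rightarrow> 'a set" where
  "eps_subdiff \<epsilon> f y = {u. \<forall>w. f w \<ge> f y + ereal (inner u (w - y) - \<epsilon>)}"

definition subdiff :: "('a::real_inner \<Rightarrow> ereal) \<Rightarrow> 'a \<Rightarrow> 'a set" where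
  "subdiff f y = eps_subdiff 0 f y"

end

theory Submission
  imports Defs
begin

lemma epsf:
  fixes f :: "'a::real_inner \<Rightarrow> ereal"
  assumes pf: "proper_fun f" and u: "u \<in> eps_subdiff e f y"
  shows "f y = ereal (real_of_ereal (f y))"
    and "f w \<ge> ereal (real_of_ereal (f y) + inner u (w - y) - e)"
proof -
  have sub: "\<And>w. f w \<ge> f y + ereal (inner u (w - y) - e)" using u unfolding eps_subdiff_def by auto
  obtain x0 where x0: "f x0 \<noteq> \<infinity>" using pf unfolding proper_fun_def by auto
  have ninf: "f y \<noteq> - \<infinity>" using pf unfolding proper_fun_def by auto
  have "f y \<noteq> \<infinity>"
  proof
    assume "f y = \<infinity>"
    then have "f x0 \<ge> \<infinity>" using sub[of x0] by simp
    then show False using x0 by simp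
  qed
  then show fy: "f y = ereal (real_of_ereal (f y))" using ninf by (cases "f y") auto
  show "f w \<ge> ereal (real_of_ereal (f y) + inner u (w - y) - e)"
    using sub[of w] fy by (metis add_diff_eq plus_ereal.simps(1))
qed

lemma sc_subgrad:
  fixes g :: "'a::real_inner \<Rightarrow> ereal"
  assumes pg: "proper_fun g" and sc: "strongly_convex_fun \<mu> g" and q: "q \<in> subdiff g y" and mu: "\<mu> > 0"
  shows "g w \<ge> ereal (real_of_ereal (g y) + inner q (w - y) + \<mu>/2 * (norm (w - y))\<^sup>2)"
proof -
  define gy where "gy = real_of_ereal (g y)"
  have q0: "q \<in> eps_subdiff 0 g y" using q unfolding subdiff_def .
  have gyf: "g y = ereal gy" using epsf(1)[OF pg q0] gy_def by simp
  have sub: "\<And>w. g w \<ge> ereal (gy + inner q (w - y))" using epsf(2)[OF pg q0] gy_def by simp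
  show ?thesis
  proof (cases "g w = \<infinity>")
    case True then show ?thesis by simp
  next
    case False
    have "g w \<noteq> -\<infinity>" using pg unfolding proper_fun_def by auto
    then obtain gw where gw: "g w = ereal gw" using False by (cases "g w") auto
    define d2 where "d2 = (norm (w - y))\<^sup>2"
    define c where "c = gw - gy - inner q (w - y)"
    have c0: "c \<ge> 0" using sub[of w] gw c_def by simp
    show ?thesis
    proof (rule ccontr)
      assume "\<not> ?thesis"
      then have lt: "gw < gy + inner q (w - y) + \<mu>/2 * d2" using gw d2_def gy_def by simp
      define \<delta> where "\<delta> = \<mu>/2 * d2 - c"
      have dpos: "\<delta> > 0" using lt \<delta>_def c_def by simp
      have d2pos: "d2 > 0" using dpos c0 \<delta>_def mu
      proof -
        have "\<mu>/2*d2 > 0" using dpos c0 \<delta>_def by linarith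
        then show ?thesis using mu by (simp add: zero_less_mult_iff)
      qed
      define t where "t = \<delta> / (\<mu> * d2)"
      have tpos: "t > 0" using dpos d2pos mu t_def by simp
      have dle: "\<delta> \<le> \<mu>/2 * d2" using c0 \<delta>_def by simp
      have td: "t * (\<mu> / 2 * d2) = \<delta>/2" using d2pos mu t_def by (simp add: field_simps)
      have md: "\<mu> * d2 > 0" using d2pos mu by simp
      have "(t * 2) * (\<mu> * d2) \<le> 1 * (\<mu> * d2)"
      proof -
        have "(t * 2) * (\<mu> * d2) = 4 * (t * (\<mu> / 2 * d2))" by (simp add: algebra_simps)
        then show ?thesis using td dle by simp
      qed
      then have "t * 2 \<le> 1" using md by (rule mult_right_le_imp_le)
      then have tle: "t \<le> 1/2" by simp
      define z where "z = t *\<^sub>R w + (1 - t) *\<^sub>R y"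
      have zy: "z - y = t *\<^sub>R (w - y)" unfolding z_def by (simp add: algebra_simps)
      have "g z \<le> ereal t * g w + ereal (1 - t) * g y - ereal (\<mu> / 2 * t * (1 - t) * (norm (w - y))\<^sup>2)"
        using sc tpos tle unfolding strongly_convex_fun_def z_def by auto
      also have "\<dots> = ereal (t * gw + (1 - t) * gy - \<mu> / 2 * t * (1 - t) * d2)"
        using gw gyf d2_def by simp
      finally have up: "g z \<le> ereal (t * gw + (1 - t) * gy - \<mu> / 2 * t * (1 - t) * d2)" .
      have lo: "g z \<ge> ereal (gy + t * inner q (w - y))" using sub[of z] zy by simp
      have "gy + t * inner q (w - y) \<le> t * gw + (1 - t) * gy - \<mu> / 2 * t * (1 - t) * d2"
        using order_trans[OF lo up] by simp
      then have "t * c \<ge> t * ((1 - t) * (\<mu>/2 * d2))" unfolding c_def by (simp add: algebra_simps)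
      then have "c \<ge> (1 - t) * (\<mu>/2 * d2)" using tpos by simp
      then have "c \<ge> \<mu>/2 * d2 - \<delta>/2" using td by (simp add: algebra_simps)
      then show False using \<delta>_def dpos by linarith
    qed
  qed
qed

lemma keyvec:
  fixes p q v w :: "'a::real_inner" and a A lam \<mu> s ti li ai ki Bi :: real
  assumes rel: "a\<^sup>2 = lam * ((1 + 2*\<mu>*A) * a + (1 + \<mu>*A) * A)"
   and i1: "li * lam = 1" and i2: "ai * a = 1" and i3: "ti * (1+\<mu>*(A+a)) = 1" and i4: "Bi * (A+a) = 1" and i5: "ki * (1+lam*\<mu>) = 1"
  shows "(1+\<mu>*A)/2 * (norm (w - p))\<^sup>2 + a * (inner v w + \<mu>/2 * (norm w)\<^sup>2)
       + A * (inner v q + \<mu>/2 * (norm q)\<^sup>2)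
       - (1+\<mu>*(A+a))/2 * (norm (w - (((1+\<mu>*A)*ti) *\<^sub>R p - (a*ti) *\<^sub>R v)))\<^sup>2
       - (1-s\<^sup>2)*(A+a)*li/2 * (norm (((a-\<mu>*A*lam)*Bi) *\<^sub>R p + ((A+\<mu>*A*lam)*Bi) *\<^sub>R q))\<^sup>2
       - \<mu>*(1+\<mu>*A)*lam*A*ai/2 * (norm (p - q))\<^sup>2
     = (A+a)*li/2 * (s\<^sup>2 * (norm (((a-\<mu>*A*lam)*Bi) *\<^sub>R p + ((A+\<mu>*A*lam)*Bi) *\<^sub>R q))\<^sup>2
          - (norm (lam *\<^sub>R v - (((a-\<mu>*A*lam)*Bi) *\<^sub>R p + ((A+\<mu>*A*lam)*Bi) *\<^sub>R q)))\<^sup>2 * ki)"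
  unfolding power2_norm_eq_inner
  apply (simp add: inner_add_left inner_add_right inner_diff_left inner_diff_right inner_commute)
  using rel i1 i2 i3 i4 i5 by algebra

lemma keyvec2:
  fixes p q v w :: "'a::real_inner" and a A lam \<mu> s :: real
  assumes rel: "a\<^sup>2 = lam * ((1 + 2*\<mu>*A) * a + (1 + \<mu>*A) * A)"
   and lpos: "lam > 0" and apos: "a > 0" and A: "A \<ge> 0" and mu: "\<mu> > 0"
  shows "(1+\<mu>*A)/2 * (norm (w - p))\<^sup>2 + a * (inner v w + \<mu>/2 * (norm w)\<^sup>2)
       + A * (inner v q + \<mu>/2 * (norm q)\<^sup>2)
     = (1+\<mu>*(A+a))/2 * (norm (w - (((1+\<mu>*A)/(1+\<mu>*(A+a))) *\<^sub>R p - (a/(1+\<mu>*(A+a))) *\<^sub>R v)))\<^sup>2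
       + (1-s\<^sup>2)*(A+a)/lam/2 * (norm (((a-\<mu>*A*lam)/(A+a)) *\<^sub>R p + ((A+\<mu>*A*lam)/(A+a)) *\<^sub>R q))\<^sup>2
       + \<mu>*(1+\<mu>*A)*lam*A/a/2 * (norm (p - q))\<^sup>2
       + (A+a)/lam/2 * (s\<^sup>2 * (norm (((a-\<mu>*A*lam)/(A+a)) *\<^sub>R p + ((A+\<mu>*A*lam)/(A+a)) *\<^sub>R q))\<^sup>2
          - (norm (lam *\<^sub>R v - (((a-\<mu>*A*lam)/(A+a)) *\<^sub>R p + ((A+\<mu>*A*lam)/(A+a)) *\<^sub>R q)))\<^sup>2 / (1+lam*\<mu>))"
proof -
  have n3: "1+\<mu>*(A+a) \<noteq> 0" proof -
    have "\<mu>*(A+a) \<ge> 0" using mu A apos by simp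
    then show ?thesis by linarith
  qed
  have n5: "1+lam*\<mu> \<noteq> 0" proof -
    have "lam*\<mu> \<ge> 0" using mu lpos by simp
    then show ?thesis by linarith
  qed
  have n4: "A + a \<noteq> 0" using A apos by simp
  note kv = keyvec[OF rel, where li="1/lam" and ai="1/a" and ti="1/(1+\<mu>*(A+a))" and Bi="1/(A+a)" and ki="1/(1+lam*\<mu>)" and w=w and p=p and v=v and s=s and q=q]
  have e1: "(1 / lam) * lam = 1" "(1/a)*a = 1" "(1/(1+\<mu>*(A+a)))*(1+\<mu>*(A+a)) = 1" "(1/(A+a))*(A+a) = 1"
     "(1/(1+lam*\<mu>))*(1+lam*\<mu>) = 1" using lpos apos n3 n4 n5 by auto
  note E = kv[OF e1, simplified times_divide_eq_right mult_1_right]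
  show ?thesis using E by linarith
qed

theorem proposition2p4:
  fixes f g :: "'a::euclidean_space \<Rightarrow> ereal"
    and \<mu> \<sigma> :: real
    and xstar :: 'a
    and x y xt v :: "nat \<Rightarrow> 'a"
    and lam a A eps :: "nat \<Rightarrow> real"
  assumes f: "proper_fun f" "closed_fun f" "convex_fun f"
    and g: "proper_fun g" "closed_fun g" "convex_fun g"
    and mu: "\<mu> > 0" and gsc: "strongly_convex_fun \<mu> g"
    and hdom: "\<exists>z. f z + g z < \<infinity>"
    and xstar: "\<forall>z. f xstar + g xstar \<le> f z + g z"
    and sigma: "0 \<le> \<sigma>" "\<sigma> \<le> 1"
    and A0: "A 0 = 0"
    and lam: "\<forall>k. lam (Suc k) > 0"
    and a: "\<forall>k. a (Suc k) =
      ((1 + 2 * \<mu> * A k) * lam (Suc k)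
        + sqrt ((1 + 2 * \<mu> * A k)\<^sup>2 * (lam (Suc k))\<^sup>2 + 4 * (1 + \<mu> * A k) * A k * lam (Suc k))) / 2"
    and xt: "\<forall>k. xt k =
      ((a (Suc k) - \<mu> * A k * lam (Suc k)) / (A k + a (Suc k))) *\<^sub>R x k
      + ((A k + \<mu> * A k * lam (Suc k)) / (A k + a (Suc k))) *\<^sub>R y k"
    and eps: "\<forall>k. eps (Suc k) \<ge> 0"
    and incl: "\<forall>k. v (Suc k) \<in> {p + q | p q. p \<in> eps_subdiff (eps (Suc k)) f (y (Suc k))
                                             \<and> q \<in> subdiff g (y (Suc k))}"
    and err: "\<forall>k. (norm (lam (Suc k) *\<^sub>R v (Suc k) + y (Suc k) - xt k))\<^sup>2 / (1 + lam (Suc k) * \<mu>)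
                 + 2 * lam (Suc k) * eps (Suc k) \<le> \<sigma>\<^sup>2 * (norm (y (Suc k) - xt k))\<^sup>2"
    and Asuc: "\<forall>k. A (Suc k) = A k + a (Suc k)"
    and xsuc: "\<forall>k. x (Suc k) =
      ((1 + \<mu> * A k) / (1 + \<mu> * A (Suc k))) *\<^sub>R x k
      + ((\<mu> * a (Suc k)) / (1 + \<mu> * A (Suc k))) *\<^sub>R y (Suc k)
      - (a (Suc k) / (1 + \<mu> * A (Suc k))) *\<^sub>R v (Suc k)"
  shows "(\<forall>k\<ge>1. \<forall>z.
           ereal (A k) * ((f (y k) + g (y k)) - (f z + g z))
           + ereal ((1 - \<sigma>\<^sup>2) / 2 * (\<Sum>j=1..k. A j / lam j * (norm (y j - xt (j - 1)))\<^sup>2)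
             + (\<Sum>j=1..k. \<mu> * (1 + \<mu> * A (j - 1)) * lam j * A (j - 1) / (2 * a j)
                           * (norm (x (j - 1) - y (j - 1)))\<^sup>2)
             + (1 + \<mu> * A k) / 2 * (norm (z - x k))\<^sup>2)
           \<le> ereal ((norm (z - x 0))\<^sup>2 / 2))
       \<and> (\<sigma> < 1 \<longrightarrow> (\<forall>k\<ge>1. (\<Sum>j=1..k. A j / lam j * (norm (y j - xt (j - 1)))\<^sup>2)
                             \<le> (norm (xstar - x 0))\<^sup>2 / (1 - \<sigma>\<^sup>2)))"
proof -
  define H where "H j = real_of_ereal (f (y j)) + real_of_ereal (g (y j))" for j
  define gam where "gam j w = H j - eps j + inner (v j) (w - y j) + \<mu>/2 * (norm (w - y j))\<^sup>2" for j w
  define S1 where "S1 k = (\<Sum>j=1..k. A j / lam j * (norm (y j - xt (j - 1)))\<^sup>2)" for k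
  define S2 where "S2 k = (\<Sum>j=1..k. \<mu> * (1 + \<mu> * A (j - 1)) * lam j * A (j - 1) / (2 * a j)
                           * (norm (x (j - 1) - y (j - 1)))\<^sup>2)" for k
  define Phi where "Phi k w = (\<Sum>j=1..k. a j * gam j w) + (norm (w - x 0))\<^sup>2 / 2" for k w
  have apos_of: "a (Suc k) > 0" if "A k \<ge> 0" for k
  proof -
    have "(1 + 2 * \<mu> * A k) * lam (Suc k) > 0" using that mu lam
    proof -
      have "2*\<mu>*A k \<ge> 0" using that mu by simp
      then have "1 + 2*\<mu>*A k > 0" by linarith
      then show ?thesis using lam by simp
    qed
    moreover have "sqrt ((1 + 2 * \<mu> * A k)\<^sup>2 * (lam (Suc k))\<^sup>2 + 4 * (1 + \<mu> * A k) * A k * lam (Suc k)) \<ge> 0"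
      using that mu lam by (intro real_sqrt_ge_zero add_nonneg_nonneg mult_nonneg_nonneg) (auto intro: less_imp_le)
    ultimately show ?thesis unfolding a[rule_format, of k] by (intro half_gt_zero add_pos_nonneg)
  qed
  have Anonneg: "A k \<ge> 0" for k
  proof (induction k)
    case 0 then show ?case using A0 by simp
  next
    case (Suc k) then show ?case using apos_of[OF Suc] Asuc[rule_format, of k] by linarith
  qed
  have apos: "a (Suc k) > 0" for k using apos_of Anonneg by blast
  have Asum: "A k = (\<Sum>j=1..k. a j)" for k
  proof (induction k)
    case 0 then show ?case using A0 by simp
  next
    case (Suc k) then show ?case using Asuc by simp
  qed
  have rel: "(a (Suc k))\<^sup>2 = lam (Suc k) * ((1 + 2*\<mu>*A k) * a (Suc k) + (1 + \<mu>*A k) * A k)" for k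
  proof -
    define B where "B = (1 + 2 * \<mu> * A k) * lam (Suc k)"
    define C where "C = (1 + \<mu> * A k) * A k * lam (Suc k)"
    have C0: "C \<ge> 0"
    proof -
      have "\<mu> * A k \<ge> 0" using Anonneg[of k] mu by simp
      then have "1 + \<mu> * A k \<ge> 0" by linarith
      moreover have "lam (Suc k) \<ge> 0" using lam less_imp_le by blast
      ultimately show ?thesis unfolding C_def using Anonneg[of k] by (intro mult_nonneg_nonneg)
    qed
    have "(1 + 2 * \<mu> * A k)\<^sup>2 * (lam (Suc k))\<^sup>2 + 4 * (1 + \<mu> * A k) * A k * lam (Suc k) = B^2 + 4*C"
      unfolding B_def C_def by (simp add: power_mult_distrib)
    then have aa: "a (Suc k) = (B + sqrt (B^2 + 4*C)) / 2" using a B_def by simp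
    have "(sqrt (B^2 + 4*C))^2 = B^2 + 4*C" using C0 by (simp add: add_nonneg_nonneg)
    moreover have "2 * a (Suc k) - B = sqrt (B^2 + 4*C)" using aa by simp
    ultimately have "(2 * a (Suc k) - B)^2 = B^2 + 4*C" by simp
    then have "(a (Suc k))\<^sup>2 = a (Suc k) * B + C" by algebra
    then show ?thesis unfolding B_def C_def by (simp add: algebra_simps)
  qed
  have hfacts: "f (y (Suc k)) + g (y (Suc k)) = ereal (H (Suc k))
      \<and> (\<forall>w. f w + g w \<ge> ereal (gam (Suc k) w))" for k
  proof -
    obtain p q where pq: "v (Suc k) = p + q" "p \<in> eps_subdiff (eps (Suc k)) f (y (Suc k))"
      "q \<in> subdiff g (y (Suc k))" using incl by blast
    have q0: "q \<in> eps_subdiff 0 g (y (Suc k))" using pq(3) unfolding subdiff_def .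
    have F: "f (y (Suc k)) = ereal (real_of_ereal (f (y (Suc k))))" using epsf(1)[OF f(1) pq(2)] .
    have G: "g (y (Suc k)) = ereal (real_of_ereal (g (y (Suc k))))" using epsf(1)[OF g(1) q0] .
    have 1: "f (y (Suc k)) + g (y (Suc k)) = ereal (H (Suc k))"
      unfolding H_def by (subst F, subst G) simp
    have 2: "f w + g w \<ge> ereal (gam (Suc k) w)" for w
    proof -
      have "ereal (gam (Suc k) w) = ereal (real_of_ereal (f (y (Suc k))) + inner p (w - y (Suc k)) - eps (Suc k))
         + ereal (real_of_ereal (g (y (Suc k))) + inner q (w - y (Suc k)) + \<mu>/2 * (norm (w - y (Suc k)))\<^sup>2)"
        unfolding gam_def H_def pq(1) by (simp add: inner_add_left)
      also have "\<dots> \<le> f w + g w"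
        by (rule add_mono[OF epsf(2)[OF f(1) pq(2)] sc_subgrad[OF g(1) gsc pq(3) mu]])
      finally show ?thesis .
    qed
    show ?thesis using 1 2 by blast
  qed
  have claim: "\<forall>w. A k * H k + (1 - \<sigma>\<^sup>2) / 2 * S1 k + S2 k + (1 + \<mu> * A k) / 2 * (norm (w - x k))\<^sup>2 \<le> Phi k w" for k
  proof (induction k)
    case 0 then show ?case by (simp add: A0 S1_def S2_def Phi_def)
  next
    case (Suc k)
    show ?case
    proof
      fix w
      define A0 where "A0 = A k"
      define a1 where "a1 = a (Suc k)"
      define l where "l = lam (Suc k)"
      define ty where "ty = y (Suc k)"
      define vv where "vv = v (Suc k)"
      define e where "e = eps (Suc k)"
      define p where "p = x k - ty"
      define q where "q = y k - ty"
      have A1: "A (Suc k) = A0 + a1" using Asuc A0_def a1_def by simp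
      have A0n: "A0 \<ge> 0" using Anonneg A0_def by simp
      have a1p: "a1 > 0" using apos a1_def by simp
      have lp: "l > 0" using lam l_def by simp
      have relk: "a1\<^sup>2 = l * ((1 + 2*\<mu>*A0) * a1 + (1 + \<mu>*A0) * A0)" using rel A0_def a1_def l_def by simp
      note KV = keyvec2[OF relk lp a1p A0n mu, where w="w - ty" and p=p and q=q and v=vv and s=\<sigma>]
      have tpos: "1 + \<mu> * (A0 + a1) > 0" proof -
        have "\<mu> * (A0 + a1) \<ge> 0" using A0n a1p mu by simp
        then show ?thesis by linarith
      qed
      have Apos': "A0 + a1 > 0" using A0n a1p by simp
      have E1: "w - ty - p = w - x k" unfolding p_def by simp
      have E2: "w - ty - (((1+\<mu>*A0)/(1+\<mu>*(A0+a1))) *\<^sub>R p - (a1/(1+\<mu>*(A0+a1))) *\<^sub>R vv) = w - x (Suc k)"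
      proof -
        have c: "(1+\<mu>*A0)/(1+\<mu>*(A0+a1)) + (\<mu>*a1)/(1+\<mu>*(A0+a1)) = 1"
          unfolding add_divide_distrib[symmetric] using tpos by (simp add: algebra_simps)
        have "x (Suc k) = ((1+\<mu>*A0)/(1+\<mu>*(A0+a1))) *\<^sub>R x k + ((\<mu>*a1)/(1+\<mu>*(A0+a1))) *\<^sub>R ty
             - (a1/(1+\<mu>*(A0+a1))) *\<^sub>R vv"
          using xsuc A1 unfolding A0_def a1_def ty_def vv_def by simp
        also have "\<dots> = ((1+\<mu>*A0)/(1+\<mu>*(A0+a1))) *\<^sub>R p
            + ((1+\<mu>*A0)/(1+\<mu>*(A0+a1)) + (\<mu>*a1)/(1+\<mu>*(A0+a1))) *\<^sub>R ty - (a1/(1+\<mu>*(A0+a1))) *\<^sub>R vv"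
          unfolding p_def by (simp add: algebra_simps)
        finally show ?thesis using c by simp
      qed
      have E3: "((a1-\<mu>*A0*l)/(A0+a1)) *\<^sub>R p + ((A0+\<mu>*A0*l)/(A0+a1)) *\<^sub>R q = xt k - ty"
      proof -
        have c: "(a1-\<mu>*A0*l)/(A0+a1) + (A0+\<mu>*A0*l)/(A0+a1) = 1"
          unfolding add_divide_distrib[symmetric] using Apos' by (simp add: algebra_simps)
        have "xt k = ((a1-\<mu>*A0*l)/(A0+a1)) *\<^sub>R x k + ((A0+\<mu>*A0*l)/(A0+a1)) *\<^sub>R y k"
          using xt unfolding A0_def a1_def l_def by simp
        then have "xt k - ty = ((a1-\<mu>*A0*l)/(A0+a1)) *\<^sub>R p + ((A0+\<mu>*A0*l)/(A0+a1)) *\<^sub>R q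
            + ((a1-\<mu>*A0*l)/(A0+a1) + (A0+\<mu>*A0*l)/(A0+a1) - 1) *\<^sub>R ty"
          unfolding p_def q_def by (simp add: algebra_simps)
        then show ?thesis using c by simp
      qed
      have E4: "p - q = x k - y k" unfolding p_def q_def by simp
      have E5: "l *\<^sub>R vv - (xt k - ty) = l *\<^sub>R vv + ty - xt k" by simp
      have E6: "norm (xt k - ty) = norm (ty - xt k)" by (rule norm_minus_commute)
      note KV2 = KV[unfolded E1 E2 E3 E4 E5 E6]
      have errk: "(norm (l *\<^sub>R vv + ty - xt k))\<^sup>2 / (1 + l * \<mu>) + 2 * l * e \<le> \<sigma>\<^sup>2 * (norm (ty - xt k))\<^sup>2"
        using err unfolding l_def vv_def ty_def e_def by simp
      have slack: "(A0+a1)/l/2 * (\<sigma>\<^sup>2 * (norm (ty - xt k))\<^sup>2 - (norm (l *\<^sub>R vv + ty - xt k))\<^sup>2 / (1 + l * \<mu>))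
          \<ge> (A0+a1) * e"
      proof -
        have "(A0+a1)/l/2 * (2 * l * e) \<le> (A0+a1)/l/2 * (\<sigma>\<^sup>2 * (norm (ty - xt k))\<^sup>2 - (norm (l *\<^sub>R vv + ty - xt k))\<^sup>2 / (1 + l * \<mu>))"
          by (rule mult_left_mono) (use errk Apos' lp in auto)
        moreover have "(A0+a1)/l/2 * (2 * l * e) = (A0+a1) * e" using lp by simp
        ultimately show ?thesis by simp
      qed
      have hyk: "A0 * H k \<ge> A0 * gam (Suc k) (y k)"
      proof (cases k)
        case 0 then show ?thesis using A0 A0_def by simp
      next
        case (Suc k')
        have "ereal (gam (Suc k) (y k)) \<le> ereal (H k)"
          using hfacts[of k] hfacts[of k'] Suc by metis
        then show ?thesis using A0n by (simp add: mult_left_mono)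
      qed
      have gsum: "A0 * gam (Suc k) (y k) + a1 * gam (Suc k) w = (A0 + a1) * (H (Suc k) - e)
          + a1 * (inner vv (w - ty) + \<mu>/2 * (norm (w - ty))\<^sup>2) + A0 * (inner vv q + \<mu>/2 * (norm q)\<^sup>2)"
        unfolding gam_def q_def vv_def ty_def e_def by (simp add: algebra_simps)
      have PhiS: "Phi (Suc k) w = Phi k w + a1 * gam (Suc k) w" unfolding Phi_def a1_def by simp
      have S1S: "S1 (Suc k) = S1 k + (A0 + a1) / l * (norm (ty - xt k))\<^sup>2"
        unfolding S1_def using A1 l_def ty_def by simp
      have S2S: "S2 (Suc k) = S2 k + \<mu> * (1 + \<mu> * A0) * l * A0 / (2 * a1) * (norm (x k - y k))\<^sup>2"
        unfolding S2_def using A0_def l_def a1_def by simp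
      have t1: "(1 - \<sigma>\<^sup>2) * (A0 + a1) / l / 2 * (norm (ty - xt k))\<^sup>2 = (1 - \<sigma>\<^sup>2) / 2 * ((A0 + a1) / l * (norm (ty - xt k))\<^sup>2)"
        by simp
      have t2: "\<mu> * (1 + \<mu> * A0) * l * A0 / a1 / 2 * (norm (x k - y k))\<^sup>2 = \<mu> * (1 + \<mu> * A0) * l * A0 / (2 * a1) * (norm (x k - y k))\<^sup>2"
        by simp
      have IH: "A0 * H k + (1 - \<sigma>\<^sup>2) / 2 * S1 k + S2 k + (1 + \<mu> * A0) / 2 * (norm (w - x k))\<^sup>2 \<le> Phi k w"
        using Suc.IH A0_def by simp
      have "A (Suc k) * H (Suc k) + (1 - \<sigma>\<^sup>2) / 2 * S1 (Suc k) + S2 (Suc k) + (1 + \<mu> * A (Suc k)) / 2 * (norm (w - x (Suc k)))\<^sup>2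
          \<le> Phi (Suc k) w"
        unfolding PhiS S1S S2S A1 using IH hyk gsum KV2 slack t1 t2
        by (simp add: algebra_simps) linarith?
      then show "A (Suc k) * H (Suc k) + (1 - \<sigma>\<^sup>2) / 2 * S1 (Suc k) + S2 (Suc k) + (1 + \<mu> * A (Suc k)) / 2 * (norm (w - x (Suc k)))\<^sup>2
          \<le> Phi (Suc k) w" .
    qed
  qed
  have Akpos: "A k > 0" if k1: "k \<ge> 1" for k
  proof -
    obtain k' where k: "k = Suc k'" using k1 by (cases k) auto
    show ?thesis unfolding k using Asuc[rule_format, of k'] Anonneg[of k'] apos[of k'] by linarith
  qed
  have hyk: "f (y k) + g (y k) = ereal (H k)" if k1: "k \<ge> 1" for k
  proof -
    obtain k' where k: "k = Suc k'" using k1 by (cases k) auto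
    show ?thesis using hfacts[of k'] k by simp
  qed
  have real_a: "A k * H k + (1 - \<sigma>\<^sup>2) / 2 * S1 k + S2 k + (1 + \<mu> * A k) / 2 * (norm (z - x k))\<^sup>2
      \<le> A k * hz + (norm (z - x 0))\<^sup>2 / 2" if hz: "f z + g z = ereal hz" for k z hz
  proof -
    have "(\<Sum>j=1..k. a j * gam j z) \<le> (\<Sum>j=1..k. a j * hz)"
    proof (rule sum_mono)
      fix j assume j: "j \<in> {1..k}"
      then obtain j' where j': "j = Suc j'" by (cases j) auto
      have "ereal (gam j z) \<le> ereal hz" using hfacts[of j'] hz j' by metis
      moreover have "a j \<ge> 0" using apos[of j'] j' by simp
      ultimately show "a j * gam j z \<le> a j * hz" by (simp add: mult_left_mono)
    qed
    also have "\<dots> = A k * hz" using Asum[of k] by (simp add: sum_distrib_right)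
    finally have "Phi k z \<le> A k * hz + (norm (z - x 0))\<^sup>2 / 2" unfolding Phi_def by simp
    then show ?thesis using claim[of k] by (meson order_trans spec)
  qed
  have notminf: "f z + g z \<noteq> -\<infinity>" for z
  proof -
    have "f z \<noteq> -\<infinity>" "g z \<noteq> -\<infinity>" using f(1) g(1) unfolding proper_fun_def by auto
    then show ?thesis by (cases "f z"; cases "g z") auto
  qed
  have partA: "\<forall>k\<ge>1. \<forall>z.
           ereal (A k) * ((f (y k) + g (y k)) - (f z + g z))
           + ereal ((1 - \<sigma>\<^sup>2) / 2 * (\<Sum>j=1..k. A j / lam j * (norm (y j - xt (j - 1)))\<^sup>2)
             + (\<Sum>j=1..k. \<mu> * (1 + \<mu> * A (j - 1)) * lam j * A (j - 1) / (2 * a j)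
                           * (norm (x (j - 1) - y (j - 1)))\<^sup>2)
             + (1 + \<mu> * A k) / 2 * (norm (z - x k))\<^sup>2)
           \<le> ereal ((norm (z - x 0))\<^sup>2 / 2)"
  proof (intro allI impI)
    fix k z assume k: "(k::nat) \<ge> 1"
    show "ereal (A k) * ((f (y k) + g (y k)) - (f z + g z))
           + ereal ((1 - \<sigma>\<^sup>2) / 2 * (\<Sum>j=1..k. A j / lam j * (norm (y j - xt (j - 1)))\<^sup>2)
             + (\<Sum>j=1..k. \<mu> * (1 + \<mu> * A (j - 1)) * lam j * A (j - 1) / (2 * a j)
                           * (norm (x (j - 1) - y (j - 1)))\<^sup>2)
             + (1 + \<mu> * A k) / 2 * (norm (z - x k))\<^sup>2)
           \<le> ereal ((norm (z - x 0))\<^sup>2 / 2)"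
    proof (cases "f z + g z = \<infinity>")
      case True
      have "ereal (A k) * ((f (y k) + g (y k)) - (f z + g z)) = -\<infinity>"
        unfolding True hyk[OF k] using Akpos[OF k] by simp
      then show ?thesis by (simp only:) simp
    next
      case False
      then obtain hz where hz: "f z + g z = ereal hz" using notminf[of z] by (cases "f z + g z") auto
      have ra: "A k * H k + (1 - \<sigma>\<^sup>2) / 2 * S1 k + S2 k + (1 + \<mu> * A k) / 2 * (norm (z - x k))\<^sup>2
          \<le> A k * hz + (norm (z - x 0))\<^sup>2 / 2" by (rule real_a[OF hz])
      have "ereal (A k) * ((f (y k) + g (y k)) - (f z + g z))
           + ereal ((1 - \<sigma>\<^sup>2) / 2 * S1 k + S2 k + (1 + \<mu> * A k) / 2 * (norm (z - x k))\<^sup>2)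
         = ereal (A k * (H k - hz) + ((1 - \<sigma>\<^sup>2) / 2 * S1 k + S2 k + (1 + \<mu> * A k) / 2 * (norm (z - x k))\<^sup>2))"
        unfolding hyk[OF k] hz by simp
      also have "\<dots> \<le> ereal ((norm (z - x 0))\<^sup>2 / 2)"
        using ra by (simp add: right_diff_distrib)
      finally show ?thesis unfolding S1_def S2_def .
    qed
  qed
  have partB: "\<sigma> < 1 \<longrightarrow> (\<forall>k\<ge>1. (\<Sum>j=1..k. A j / lam j * (norm (y j - xt (j - 1)))\<^sup>2)
                             \<le> (norm (xstar - x 0))\<^sup>2 / (1 - \<sigma>\<^sup>2))"
  proof (intro impI allI)
    fix k :: nat assume s1: "\<sigma> < 1" and k: "k \<ge> 1"
    obtain z0 where z0: "f z0 + g z0 < \<infinity>" using hdom by blast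
    have "f xstar + g xstar \<noteq> \<infinity>" using xstar z0 by (metis ereal_infty_less(1) order_le_less_trans)
    then obtain hs where hs: "f xstar + g xstar = ereal hs" using notminf[of xstar]
      by (cases "f xstar + g xstar") auto
    have Hge: "H k \<ge> hs" using xstar hyk[OF k] hs by (metis ereal_less_eq(3))
    have S2n: "S2 k \<ge> 0" unfolding S2_def
    proof (rule sum_nonneg)
      fix j assume j: "j \<in> {1..k}"
      then obtain j' where j': "j = Suc j'" by (cases j) auto
      have "a j > 0" "lam j > 0" "A (j - 1) \<ge> 0" using apos[of j'] lam Anonneg j' by auto
      then show "0 \<le> \<mu> * (1 + \<mu> * A (j - 1)) * lam j * A (j - 1) / (2 * a j) * (norm (x (j - 1) - y (j - 1)))\<^sup>2"
        using mu by (simp add: mult_nonneg_nonneg)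
    qed
    have t3: "(1 + \<mu> * A k) / 2 * (norm (xstar - x k))\<^sup>2 \<ge> 0" using mu Anonneg[of k] by simp
    have t4: "A k * H k - A k * hs \<ge> 0" using Hge Anonneg[of k] by (simp add: mult_left_mono)
    have "(1 - \<sigma>\<^sup>2) / 2 * S1 k \<le> (norm (xstar - x 0))\<^sup>2 / 2"
      using real_a[OF hs, of k] S2n t3 t4 by linarith
    moreover have s2: "1 - \<sigma>\<^sup>2 > 0" using s1 sigma by (simp add: power_less_one_iff abs_square_less_1)
    ultimately have "S1 k * (1 - \<sigma>\<^sup>2) \<le> (norm (xstar - x 0))\<^sup>2" by (simp add: algebra_simps)
    then have "S1 k \<le> (norm (xstar - x 0))\<^sup>2 / (1 - \<sigma>\<^sup>2)" using s2 by (simp add: pos_le_divide_eq)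
    then show "(\<Sum>j=1..k. A j / lam j * (norm (y j - xt (j - 1)))\<^sup>2) \<le> (norm (xstar - x 0))\<^sup>2 / (1 - \<sigma>\<^sup>2)"
      unfolding S1_def .
  qed
  show ?thesis using partA partB by blast
qed

end
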